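(* Let $\alpha\in(0,2]$, $c>0$, $a>0$, and for $c'>0$ let $\{G^{\alpha,c',a}(s):s\ge0\}$ denote the centered Gaussian process with covariance $\mathrm{Cov}(G^{\alpha,c',a}(s),G^{\alpha,c',a}(r))=\frac12\big(f^{\alpha,c',a}(s)+f^{\alpha,c',a}(r)-f^{\alpha,c',a}(|s-r|)\big)$. Then for any constant $b>0$, $$\{G^{\alpha,c,a}(bs)\}_{s\ge0}\overset{\mathrm{dist}}{=}\{b^{1/2}\,G^{\alpha,c/b^\alpha,a}(s)\}_{s\ge0}.$$
   Context: For $c'>0$ define $f^{\alpha,c',a}(0)=0$ and for $s>0$, $f^{\alpha,c',a}(s)=\frac{4s}{a\pi}\int_0^\infty\frac{\sin^2(u/2)}{u^2}(1-e^{-2c'(u/s)^\alpha})\,\mathrm{d}u$. *)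

theory Defs
  imports "HOL-Probability.Probability"
begin

definition f_fun :: "real \<Rightarrow> real \<Rightarrow> real \<Rightarrow> real \<Rightarrow> real" where
  "f_fun \<alpha> c' a s =
     (if s = 0 then 0
      else 4 * s / (a * pi) *
        (LBINT u:{0<..}. (sin (u / 2))\<^sup>2 / u\<^sup>2 * (1 - exp (- 2 * c' * (u / s) powr \<alpha>))))"

definition centered_normal_rv :: "'a measure \<Rightarrow> ('a \<Rightarrow> real) \<Rightarrow> real \<Rightarrow> bool" where
  "centered_normal_rv M Z v \<longleftrightarrow>
     Z \<in> borel_measurable M \<and>
     ((v = 0 \<and> (AE \<omega> in M. Z \<omega> = 0)) \<or>
      (v > 0 \<and> distributed M lborel Z (normal_density 0 (sqrt v))))"

definition centered_gaussian_process ::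
  "'a measure \<Rightarrow> 'i set \<Rightarrow> ('i \<Rightarrow> 'a \<Rightarrow> real) \<Rightarrow> ('i \<Rightarrow> 'i \<Rightarrow> real) \<Rightarrow> bool" where
  "centered_gaussian_process M T X K \<longleftrightarrow>
     prob_space M \<and>
     (\<forall>t\<in>T. X t \<in> borel_measurable M) \<and>
     (\<forall>S w. finite S \<longrightarrow> S \<subseteq> T \<longrightarrow>
        centered_normal_rv M (\<lambda>\<omega>. \<Sum>t\<in>S. w t * X t \<omega>)
          (\<Sum>s\<in>S. \<Sum>t\<in>S. w s * w t * K s t))"

definition G_cov :: "real \<Rightarrow> real \<Rightarrow> real \<Rightarrow> real \<Rightarrow> real \<Rightarrow> real" where
  "G_cov \<alpha> c' a s r = (f_fun \<alpha> c' a s + f_fun \<alpha> c' a r - f_fun \<alpha> c' a \<bar>s - r\<bar>) / 2"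

end

theory Submission
  imports Defs
begin
lemma char_unique_finite:
  fixes \<rho>1 \<rho>2 :: "real measure"
  assumes f1: "finite_measure \<rho>1" and f2: "finite_measure \<rho>2"
    and s1: "sets \<rho>1 = sets borel" and s2: "sets \<rho>2 = sets borel"
    and ch: "\<And>\<tau>. (\<integral>y. iexp (\<tau> * y) \<partial>\<rho>1) = (\<integral>y. iexp (\<tau> * y) \<partial>\<rho>2)"
  shows "\<rho>1 = \<rho>2"
proof -
  interpret r1: finite_measure \<rho>1 by fact
  interpret r2: finite_measure \<rho>2 by fact
  have sp1: "space \<rho>1 = UNIV" using sets_eq_imp_space_eq[OF s1] by simp
  have sp2: "space \<rho>2 = UNIV" using sets_eq_imp_space_eq[OF s2] by simp
  have "complex_of_real (measure \<rho>1 UNIV) = complex_of_real (measure \<rho>2 UNIV)"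
    using ch[of 0] sp1 sp2 by simp
  then have meq: "measure \<rho>1 UNIV = measure \<rho>2 UNIV" by simp
  define m where "m = measure \<rho>1 UNIV"
  show ?thesis
  proof (cases "m = 0")
    case True
    have z1: "emeasure \<rho>1 A = 0" for A
    proof -
      have "emeasure \<rho>1 A \<le> emeasure \<rho>1 (space \<rho>1)" by (rule emeasure_space)
      also have "\<dots> = 0" using True sp1 r1.emeasure_eq_measure m_def by simp
      finally show ?thesis by simp
    qed
    have z2: "emeasure \<rho>2 A = 0" for A
    proof -
      have "emeasure \<rho>2 A \<le> emeasure \<rho>2 (space \<rho>2)" by (rule emeasure_space)
      also have "\<dots> = 0" using True sp2 r2.emeasure_eq_measure m_def meq by simp
      finally show ?thesis by simp
    qed
    show ?thesis by (rule measure_eqI) (use s1 s2 z1 z2 in auto)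
  next
    case False
    then have mpos: "m > 0" using m_def by (simp add: order_le_neq_trans)
    define d1 where "d1 = density \<rho>1 (\<lambda>_. ennreal (1/m))"
    define d2 where "d2 = density \<rho>2 (\<lambda>_. ennreal (1/m))"
    have e1: "emeasure d1 A = ennreal (1/m) * emeasure \<rho>1 A" if "A \<in> sets borel" for A
      unfolding d1_def using that s1 by (simp add: emeasure_density_const)
    have e2: "emeasure d2 A = ennreal (1/m) * emeasure \<rho>2 A" if "A \<in> sets borel" for A
      unfolding d2_def using that s2 by (simp add: emeasure_density_const)
    have rd1: "real_distribution d1"
      unfolding real_distribution_def real_distribution_axioms_def
    proof (intro conjI)
      show "prob_space d1" proof (rule prob_spaceI)
      show "emeasure d1 (space d1) = 1" using e1[of UNIV] sp1 mpos r1.emeasure_eq_measure m_def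
        by (simp add: d1_def ennreal_mult''[symmetric])
qed
      show "sets d1 = sets borel" using s1 by (simp add: d1_def)
    qed
    have rd2: "real_distribution d2"
      unfolding real_distribution_def real_distribution_axioms_def
    proof (intro conjI)
      show "prob_space d2" proof (rule prob_spaceI)
      show "emeasure d2 (space d2) = 1" using e2[of UNIV] sp2 mpos r2.emeasure_eq_measure m_def meq
        by (simp add: d2_def ennreal_mult''[symmetric])
qed
      show "sets d2 = sets borel" using s2 by (simp add: d2_def)
    qed
    have "char d1 = char d2"
    proof
      fix t
      have "char d1 t = (1/m) *\<^sub>R (\<integral>y. iexp (t * y) \<partial>\<rho>1)"
        unfolding char_def d1_def using mpos s1
        by (subst integral_density) (auto simp: measurable_cong_sets[OF s1 refl])
      also have "\<dots> = (1/m) *\<^sub>R (\<integral>y. iexp (t * y) \<partial>\<rho>2)" using ch by simp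
      also have "\<dots> = char d2 t"
        unfolding char_def d2_def using mpos s2
        by (subst integral_density) (auto simp: measurable_cong_sets[OF s2 refl])
      finally show "char d1 t = char d2 t" .
    qed
    then have deq: "d1 = d2" using Levy_uniqueness rd1 rd2 by blast
    show ?thesis
    proof (rule measure_eqI)
      show "sets \<rho>1 = sets \<rho>2" using s1 s2 by simp
      fix A assume A: "A \<in> sets \<rho>1"
      have "ennreal m * emeasure d1 A = emeasure \<rho>1 A"
        using e1[of A] A s1 mpos by (simp add: ennreal_mult''[symmetric] mult.assoc[symmetric])
      moreover have "ennreal m * emeasure d2 A = emeasure \<rho>2 A"
        using e2[of A] A s1 mpos by (simp add: ennreal_mult''[symmetric] mult.assoc[symmetric])
      ultimately show "emeasure \<rho>1 A = emeasure \<rho>2 A" using deq by simp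
    qed
  qed
qed

lemma finite_measure_density_bounded:
  assumes fm: "finite_measure M" and w: "w \<in> borel_measurable M"
    and wb: "\<And>x. w x \<le> B"
  shows "finite_measure (density M (\<lambda>x. ennreal (w x)))"
proof (rule finite_measureI)
  interpret finite_measure M by fact
  have "emeasure (density M (\<lambda>x. ennreal (w x))) (space (density M (\<lambda>x. ennreal (w x))))
      = (\<integral>\<^sup>+x. ennreal (w x) * indicator (space M) x \<partial>M)"
    using w by (simp add: emeasure_density)
  also have "\<dots> \<le> (\<integral>\<^sup>+x. ennreal B \<partial>M)"
    by (intro nn_integral_mono) (auto simp: indicator_def wb ennreal_leI)
  also have "\<dots> = ennreal B * emeasure M (space M)" by simp
  also have "\<dots> < \<infinity>" by (simp add: ennreal_mult_less_top emeasure_eq_measure)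
  finally show "emeasure (density M (\<lambda>x. ennreal (w x))) (space (density M (\<lambda>x. ennreal (w x)))) \<noteq> \<infinity>"
    by simp
qed

lemma step1d:
  fixes f :: "'a \<Rightarrow> real" and w :: "'a \<Rightarrow> real"
  assumes fm: "finite_measure \<mu>" and fn: "finite_measure \<nu>" and seq: "sets \<mu> = sets \<nu>"
    and f: "f \<in> borel_measurable \<mu>" and w: "w \<in> borel_measurable \<mu>"
    and w0: "\<And>x. 0 \<le> w x" and wb: "\<And>x. w x \<le> B"
    and ch: "\<And>\<tau>. (\<integral>x. w x *\<^sub>R iexp (\<tau> * f x) \<partial>\<mu>) = (\<integral>x. w x *\<^sub>R iexp (\<tau> * f x) \<partial>\<nu>)"
    and E: "E \<in> sets borel"
  shows "(\<integral>x. w x * indicator E (f x) \<partial>\<mu>) = (\<integral>x. w x * indicator E (f x) \<partial>\<nu>)"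
proof -
  have fn': "f \<in> borel_measurable \<nu>" using f measurable_cong_sets[OF seq, of borel borel] by metis
  have wn': "w \<in> borel_measurable \<nu>" using w measurable_cong_sets[OF seq, of borel borel] by metis
  define r1 where "r1 = distr (density \<mu> (\<lambda>x. ennreal (w x))) borel f"
  define r2 where "r2 = distr (density \<nu> (\<lambda>x. ennreal (w x))) borel f"
  have fr1: "finite_measure r1" unfolding r1_def
    by (rule finite_measure.finite_measure_distr[OF finite_measure_density_bounded[OF fm w wb]])
       (use f in simp)
  have fr2: "finite_measure r2" unfolding r2_def
    by (rule finite_measure.finite_measure_distr[OF finite_measure_density_bounded[OF fn wn' wb]])
       (use fn' in simp)
  have [measurable]: "f \<in> borel_measurable \<mu>" "w \<in> borel_measurable \<mu>"
    "f \<in> borel_measurable \<nu>" "w \<in> borel_measurable \<nu>" using f w fn' wn' by auto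
  have i1: "integral\<^sup>L r1 g = (\<integral>x. w x *\<^sub>R g (f x) \<partial>\<mu>)" if g[measurable]: "g \<in> borel_measurable borel"
    for g :: "real \<Rightarrow> 'b::{banach, second_countable_topology}"
  proof -
    have "integral\<^sup>L r1 g = (\<integral>x. g (f x) \<partial>density \<mu> (\<lambda>x. ennreal (w x)))"
      unfolding r1_def by (rule integral_distr) measurable
    also have "\<dots> = (\<integral>x. w x *\<^sub>R g (f x) \<partial>\<mu>)"
      by (rule integral_density) (auto simp: w0)
    finally show ?thesis .
  qed
  have i2: "integral\<^sup>L r2 g = (\<integral>x. w x *\<^sub>R g (f x) \<partial>\<nu>)" if g[measurable]: "g \<in> borel_measurable borel"
    for g :: "real \<Rightarrow> 'b::{banach, second_countable_topology}"
  proof -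
    have "integral\<^sup>L r2 g = (\<integral>x. g (f x) \<partial>density \<nu> (\<lambda>x. ennreal (w x)))"
      unfolding r2_def by (rule integral_distr) measurable
    also have "\<dots> = (\<integral>x. w x *\<^sub>R g (f x) \<partial>\<nu>)"
      by (rule integral_density) (auto simp: w0)
    finally show ?thesis .
  qed
  have i1r: "integral\<^sup>L r1 g = (\<integral>x. w x *\<^sub>R g (f x) \<partial>\<mu>)" if g[measurable]: "g \<in> borel_measurable borel"
    for g :: "real \<Rightarrow> real"
  proof -
    have "integral\<^sup>L r1 g = (\<integral>x. g (f x) \<partial>density \<mu> (\<lambda>x. ennreal (w x)))"
      unfolding r1_def by (rule integral_distr) measurable
    also have "\<dots> = (\<integral>x. w x *\<^sub>R g (f x) \<partial>\<mu>)"
      by (rule integral_density) (auto simp: w0)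
    finally show ?thesis .
  qed
  have i2r: "integral\<^sup>L r2 g = (\<integral>x. w x *\<^sub>R g (f x) \<partial>\<nu>)" if g[measurable]: "g \<in> borel_measurable borel"
    for g :: "real \<Rightarrow> real"
  proof -
    have "integral\<^sup>L r2 g = (\<integral>x. g (f x) \<partial>density \<nu> (\<lambda>x. ennreal (w x)))"
      unfolding r2_def by (rule integral_distr) measurable
    also have "\<dots> = (\<integral>x. w x *\<^sub>R g (f x) \<partial>\<nu>)"
      by (rule integral_density) (auto simp: w0)
    finally show ?thesis .
  qed
  have "r1 = r2"
  proof (rule char_unique_finite[OF fr1 fr2])
    show "sets r1 = sets borel" "sets r2 = sets borel" by (simp_all add: r1_def r2_def)
    fix \<tau>
    show "(\<integral>y. iexp (\<tau> * y) \<partial>r1) = (\<integral>y. iexp (\<tau> * y) \<partial>r2)"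
    proof -
      have "(\<integral>y. iexp (\<tau> * y) \<partial>r1) = (\<integral>x. w x *\<^sub>R iexp (\<tau> * f x) \<partial>\<mu>)"
        by (rule i1) measurable
      also have "\<dots> = (\<integral>x. w x *\<^sub>R iexp (\<tau> * f x) \<partial>\<nu>)" by (rule ch)
      also have "\<dots> = (\<integral>y. iexp (\<tau> * y) \<partial>r2)"
        by (rule i2[symmetric]) measurable
      finally show ?thesis .
    qed
  qed
  then have "integral\<^sup>L r1 (indicator E :: real \<Rightarrow> real) = integral\<^sup>L r2 (indicator E)" by simp
  moreover have "integral\<^sup>L r1 (indicator E :: real \<Rightarrow> real) = (\<integral>x. w x *\<^sub>R indicator E (f x) \<partial>\<mu>)"
    by (rule i1r) (use E in measurable)
  moreover have "integral\<^sup>L r2 (indicator E :: real \<Rightarrow> real) = (\<integral>x. w x *\<^sub>R indicator E (f x) \<partial>\<nu>)"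
    by (rule i2r) (use E in measurable)
  ultimately show ?thesis by simp
qed

lemma cos_iexp: "complex_of_real (1 + cos b) * iexp a = iexp a + (iexp (a + b) + iexp (a + - b)) / 2"
  by (simp add: cos_of_real[symmetric] cos_exp_eq distrib_left distrib_right exp_add[symmetric] field_simps)

lemma sin_iexp: "complex_of_real (1 + sin b) * iexp a = iexp a + (iexp (a + b) - iexp (a + - b)) / (2 * \<i>)"
  by (simp add: sin_of_real[symmetric] sin_exp_eq distrib_left distrib_right exp_add[symmetric] field_simps)

lemma iexp_split: "complex_of_real c * iexp b = complex_of_real (c * cos b) + \<i> * complex_of_real (c * sin b)"
  by (rule complex_eqI) (simp_all add: Re_exp Im_exp)

lemma integrable_iexp_fm:
  assumes "finite_measure M" "g \<in> borel_measurable M"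
  shows "integrable M (\<lambda>x. iexp (g x))"
proof -
  interpret finite_measure M by fact
  show ?thesis by (rule integrable_const_bound[where B=1]) (use assms(2) in \<open>auto simp: norm_exp_i_times\<close>)
qed

lemma integrable_bdd_fm:
  fixes h :: "'a \<Rightarrow> real"
  assumes "finite_measure M" "h \<in> borel_measurable M" "\<And>x. \<bar>h x\<bar> \<le> B"
  shows "integrable M h"
proof -
  interpret finite_measure M by fact
  show ?thesis by (rule integrable_const_bound[where B=B]) (use assms(2,3) in auto)
qed

lemma L_cos:
  assumes fm: "finite_measure M" and a: "a \<in> borel_measurable M" and b: "b \<in> borel_measurable M"
  shows "(\<integral>x. (1 + cos (b x)) *\<^sub>R iexp (a x) \<partial>M) =
    (\<integral>x. iexp (a x) \<partial>M) + ((\<integral>x. iexp (a x + b x) \<partial>M) + (\<integral>x. iexp (a x + - b x) \<partial>M)) / 2"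
proof -
  have i1: "integrable M (\<lambda>x. iexp (a x))" by (rule integrable_iexp_fm[OF fm]) (use a in auto)
  have i2: "integrable M (\<lambda>x. iexp (a x + b x))" by (rule integrable_iexp_fm[OF fm]) (use a b in auto)
  have i3: "integrable M (\<lambda>x. iexp (a x + - b x))" by (rule integrable_iexp_fm[OF fm]) (use a b in auto)
  have "(\<integral>x. (1 + cos (b x)) *\<^sub>R iexp (a x) \<partial>M) =
     (\<integral>x. iexp (a x) + (iexp (a x + b x) + iexp (a x + - b x)) / 2 \<partial>M)"
    by (simp add: scaleR_conv_of_real cos_iexp del: of_real_add)
  also have "\<dots> = (\<integral>x. iexp (a x) \<partial>M) + (\<integral>x. (iexp (a x + b x) + iexp (a x + - b x)) / 2 \<partial>M)"
    by (rule Bochner_Integration.integral_add[OF i1 integrable_divide[OF Bochner_Integration.integrable_add[OF i2 i3]]])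
  also have "(\<integral>x. (iexp (a x + b x) + iexp (a x + - b x)) / 2 \<partial>M) =
      ((\<integral>x. iexp (a x + b x) \<partial>M) + (\<integral>x. iexp (a x + - b x) \<partial>M)) / 2"
    by (subst integral_divide_zero) (rule arg_cong[where f="\<lambda>z. z / 2"], rule Bochner_Integration.integral_add[OF i2 i3])
  finally show ?thesis .
qed

lemma L_sin:
  assumes fm: "finite_measure M" and a: "a \<in> borel_measurable M" and b: "b \<in> borel_measurable M"
  shows "(\<integral>x. (1 + sin (b x)) *\<^sub>R iexp (a x) \<partial>M) =
    (\<integral>x. iexp (a x) \<partial>M) + ((\<integral>x. iexp (a x + b x) \<partial>M) - (\<integral>x. iexp (a x + - b x) \<partial>M)) / (2 * \<i>)"
proof -
  have i1: "integrable M (\<lambda>x. iexp (a x))" by (rule integrable_iexp_fm[OF fm]) (use a in auto)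
  have i2: "integrable M (\<lambda>x. iexp (a x + b x))" by (rule integrable_iexp_fm[OF fm]) (use a b in auto)
  have i3: "integrable M (\<lambda>x. iexp (a x + - b x))" by (rule integrable_iexp_fm[OF fm]) (use a b in auto)
  have "(\<integral>x. (1 + sin (b x)) *\<^sub>R iexp (a x) \<partial>M) =
     (\<integral>x. iexp (a x) + (iexp (a x + b x) - iexp (a x + - b x)) / (2 * \<i>) \<partial>M)"
    by (simp add: scaleR_conv_of_real sin_iexp del: of_real_add)
  also have "\<dots> = (\<integral>x. iexp (a x) \<partial>M) + (\<integral>x. (iexp (a x + b x) - iexp (a x + - b x)) / (2 * \<i>) \<partial>M)"
    by (rule Bochner_Integration.integral_add[OF i1 integrable_divide[OF Bochner_Integration.integrable_diff[OF i2 i3]]])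
  also have "(\<integral>x. (iexp (a x + b x) - iexp (a x + - b x)) / (2 * \<i>) \<partial>M) =
      ((\<integral>x. iexp (a x + b x) \<partial>M) - (\<integral>x. iexp (a x + - b x) \<partial>M)) / (2 * \<i>)"
    by (subst integral_divide_zero) (rule arg_cong[where f="\<lambda>z. z / (2 * \<i>)"], rule Bochner_Integration.integral_diff[OF i2 i3])
  finally show ?thesis .
qed

lemma L_split:
  fixes c :: "'a \<Rightarrow> real"
  assumes fm: "finite_measure M" and c: "c \<in> borel_measurable M" and b: "b \<in> borel_measurable M"
    and cb: "\<And>x. \<bar>c x\<bar> \<le> B"
  shows "(\<integral>x. c x *\<^sub>R iexp (b x) \<partial>M) =
    complex_of_real (\<integral>x. c x * cos (b x) \<partial>M) + \<i> * complex_of_real (\<integral>x. c x * sin (b x) \<partial>M)"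
proof -
  have B: "\<bar>c x * cos (b x)\<bar> \<le> B" "\<bar>c x * sin (b x)\<bar> \<le> B" for x
    using cb[of x] abs_cos_le_one[of "b x"] abs_sin_le_one[of "b x"]
    by (auto simp: abs_mult intro: mult_le_one order_trans[OF mult_right_le_one_le] )
  have "(\<integral>x. c x *\<^sub>R iexp (b x) \<partial>M) =
     (\<integral>x. complex_of_real (c x * cos (b x)) + \<i> * complex_of_real (c x * sin (b x)) \<partial>M)"
    by (simp add: scaleR_conv_of_real iexp_split del: of_real_mult)
  also have "\<dots> = (\<integral>x. complex_of_real (c x * cos (b x)) \<partial>M) + (\<integral>x. \<i> * complex_of_real (c x * sin (b x)) \<partial>M)"
  proof (rule Bochner_Integration.integral_add)
    show "integrable M (\<lambda>x. complex_of_real (c x * cos (b x)))"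
      by (rule integrable_of_real, rule integrable_bdd_fm[OF fm _ B(1)]) (use b c in auto)
    show "integrable M (\<lambda>x. \<i> * complex_of_real (c x * sin (b x)))"
      by (rule integrable_mult_right, rule integrable_of_real, rule integrable_bdd_fm[OF fm _ B(2)]) (use b c in auto)
  qed
  also have "\<dots> = complex_of_real (\<integral>x. c x * cos (b x) \<partial>M) + \<i> * complex_of_real (\<integral>x. c x * sin (b x) \<partial>M)"
    by (simp add: integral_mult_right_zero del: of_real_mult)
  finally show ?thesis .
qed

lemma eq_PiM_helper:
  fixes \<mu> \<nu> :: "('i \<Rightarrow> real) measure"
  assumes J: "finite J" and s1: "sets \<mu> = sets (PiM J (\<lambda>_. borel::real measure))"
    and s2: "sets \<nu> = sets (PiM J (\<lambda>_. borel::real measure))"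
    and fm: "finite_measure \<mu>"
    and eq: "\<And>A. (\<And>j. j \<in> J \<Longrightarrow> A j \<in> sets borel) \<Longrightarrow> emeasure \<mu> (PiE J A) = emeasure \<nu> (PiE J A)"
  shows "\<mu> = \<nu>"
proof (rule measure_eqI_PiM_finite[OF J s1 s2, where A="\<lambda>_. PiE J (\<lambda>_. UNIV)"])
  show "range (\<lambda>_. PiE J (\<lambda>_. UNIV)) \<subseteq> prod_algebra J (\<lambda>_. borel)"
    using prod_algebraI_finite[OF J, of "\<lambda>_. UNIV" "\<lambda>_. borel"] by auto
  show "(\<Union>i::nat. PiE J (\<lambda>_. UNIV)) = space (PiM J (\<lambda>_. borel::real measure))"
    by (simp add: space_PiM)
  show "emeasure \<mu> (PiE J (\<lambda>_. UNIV)) \<noteq> \<infinity>" for i :: nat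
    using finite_measure.emeasure_finite[OF fm] by simp
qed (rule eq)

lemma emb_lemma:
  fixes \<mu> :: "('i \<Rightarrow> real) measure"
  assumes s: "sets \<mu> = sets (PiM (insert j0 J) (\<lambda>_. borel::real measure))" and j0: "j0 \<notin> J"
    and fin: "finite J"
    and A: "\<And>j. j \<in> insert j0 J \<Longrightarrow> A j \<in> sets borel"
  shows "emeasure (distr (density \<mu> (\<lambda>x. ennreal (indicator (A j0) (x j0))))
            (PiM J (\<lambda>_. borel::real measure)) (\<lambda>x. restrict x J)) (PiE J A)
       = emeasure \<mu> (PiE (insert j0 J) A)"
proof -
  have [measurable_cong]: "sets \<mu> = sets (PiM (insert j0 J) (\<lambda>_. borel::real measure))" by (rule s)
  have sp: "space \<mu> = PiE (insert j0 J) (\<lambda>_. UNIV)"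
    using sets_eq_imp_space_eq[OF s] by (simp add: space_PiM)
  have mr: "(\<lambda>x. restrict x J) \<in> measurable \<mu> (PiM J (\<lambda>_. borel::real measure))"
    using measurable_restrict_subset[of J "insert j0 J" "\<lambda>_. borel::real measure"]
      measurable_cong_sets[OF s refl] by auto
  have mi: "(\<lambda>x. ennreal (indicator (A j0) (x j0))) \<in> borel_measurable \<mu>"
    using A[of j0] by measurable
  have PJ: "PiE J A \<in> sets (PiM J (\<lambda>_. borel::real measure))"
    using A fin by (intro sets_PiM_I_finite) auto
  have PI: "PiE (insert j0 J) A \<in> sets \<mu>"
    unfolding s using A fin by (intro sets_PiM_I_finite) auto
  have "emeasure (distr (density \<mu> (\<lambda>x. ennreal (indicator (A j0) (x j0))))
            (PiM J (\<lambda>_. borel::real measure)) (\<lambda>x. restrict x J)) (PiE J A)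
      = emeasure (density \<mu> (\<lambda>x. ennreal (indicator (A j0) (x j0))))
          ((\<lambda>x. restrict x J) -` PiE J A \<inter> space \<mu>)"
    using mr PJ by (subst emeasure_distr) auto
  also have "\<dots> = (\<integral>\<^sup>+x. ennreal (indicator (A j0) (x j0)) * indicator ((\<lambda>x. restrict x J) -` PiE J A \<inter> space \<mu>) x \<partial>\<mu>)"
    using mi mr PJ by (subst emeasure_density) (auto intro: measurable_sets)
  also have "\<dots> = (\<integral>\<^sup>+x. indicator (PiE (insert j0 J) A) x \<partial>\<mu>)"
  proof (rule nn_integral_cong)
    fix x assume "x \<in> space \<mu>"
    then have x: "x \<in> PiE (insert j0 J) (\<lambda>_. UNIV)" using sp by simp
    have "x \<in> PiE (insert j0 J) A \<longleftrightarrow> x j0 \<in> A j0 \<and> restrict x J \<in> PiE J A"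
      using x j0 by (auto simp: PiE_iff)
    then show "ennreal (indicator (A j0) (x j0)) * indicator ((\<lambda>x. restrict x J) -` PiE J A \<inter> space \<mu>) x
        = indicator (PiE (insert j0 J) A) x"
      using \<open>x \<in> space \<mu>\<close> by (auto simp: indicator_def)
  qed
  also have "\<dots> = emeasure \<mu> (PiE (insert j0 J) A)"
    using PI by simp
  finally show ?thesis .
qed


lemma L_sub:
  fixes h k :: "'a \<Rightarrow> real"
  assumes fm: "finite_measure M" and h: "h \<in> borel_measurable M" and k: "k \<in> borel_measurable M"
    and hb: "\<And>x. \<bar>h x\<bar> \<le> 1" and kb: "\<And>x. \<bar>k x\<bar> \<le> 1"
  shows "(\<integral>x. h x * k x \<partial>M) = (\<integral>x. (1 + k x) * h x \<partial>M) - (\<integral>x. 1 * h x \<partial>M)"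
proof -
  have hk: "\<bar>h x * k x\<bar> \<le> 1" for x using hb[of x] kb[of x]
    by (simp add: abs_mult mult_le_one)
  have i1: "integrable M (\<lambda>x. h x * k x)" by (rule integrable_bdd_fm[OF fm _ hk]) (use h k in auto)
  have i2: "integrable M (\<lambda>x. 1 * h x)" by (rule integrable_bdd_fm[OF fm _ ]) (use h hb in auto)
  have "(\<integral>x. (1 + k x) * h x \<partial>M) = (\<integral>x. 1 * h x + h x * k x \<partial>M)"
    by (simp add: algebra_simps)
  also have "\<dots> = (\<integral>x. 1 * h x \<partial>M) + (\<integral>x. h x * k x \<partial>M)"
    by (rule Bochner_Integration.integral_add[OF i2 i1])
  finally show ?thesis by simp
qed

lemma cw_finite:
  fixes J :: "'i set"
  assumes "finite J"
  shows "\<And>\<mu> \<nu> :: ('i \<Rightarrow> real) measure. finite_measure \<mu> \<Longrightarrow> finite_measure \<nu> \<Longrightarrow>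
    sets \<mu> = sets (PiM J (\<lambda>_. borel::real measure)) \<Longrightarrow> sets \<nu> = sets (PiM J (\<lambda>_. borel::real measure)) \<Longrightarrow>
    (\<And>t. (\<integral>x. iexp (\<Sum>j\<in>J. t j * x j) \<partial>\<mu>) = (\<integral>x. iexp (\<Sum>j\<in>J. t j * x j) \<partial>\<nu>)) \<Longrightarrow> \<mu> = \<nu>"
  using assms
proof (induction J rule: finite_induct)
  case empty
  fix \<mu> \<nu> :: "('i \<Rightarrow> real) measure"
  assume fm: "finite_measure \<mu>" and fn: "finite_measure \<nu>"
    and s1: "sets \<mu> = sets (PiM {} (\<lambda>_. borel::real measure))"
    and s2: "sets \<nu> = sets (PiM {} (\<lambda>_. borel::real measure))"
    and ch: "\<And>t. (\<integral>x. iexp (\<Sum>j\<in>{}. t j * x j) \<partial>\<mu>) = (\<integral>x. iexp (\<Sum>j\<in>{}. t j * x j) \<partial>\<nu>)"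
  have sp1: "space \<mu> = {\<lambda>_. undefined}" using sets_eq_imp_space_eq[OF s1] by (simp add: space_PiM)
  have sp2: "space \<nu> = {\<lambda>_. undefined}" using sets_eq_imp_space_eq[OF s2] by (simp add: space_PiM)
  have "complex_of_real (measure \<mu> (space \<mu>)) = complex_of_real (measure \<nu> (space \<nu>))"
    using ch[of "\<lambda>_. 0"] by simp
  then have "measure \<mu> (space \<mu>) = measure \<nu> (space \<nu>)" by simp
  then have me: "emeasure \<mu> (space \<mu>) = emeasure \<nu> (space \<nu>)"
    using finite_measure.emeasure_eq_measure[OF fm] finite_measure.emeasure_eq_measure[OF fn] by simp
  show "\<mu> = \<nu>"
  proof (rule eq_PiM_helper[OF _ s1 s2 fm])
    fix A :: "'i \<Rightarrow> real set"
    show "emeasure \<mu> (PiE {} A) = emeasure \<nu> (PiE {} A)"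
      using me sp1 sp2 by simp
  qed simp
next
  case (insert j0 J)
  fix \<mu> \<nu> :: "('i \<Rightarrow> real) measure"
  assume fm: "finite_measure \<mu>" and fn: "finite_measure \<nu>"
    and s1: "sets \<mu> = sets (PiM (insert j0 J) (\<lambda>_. borel::real measure))"
    and s2: "sets \<nu> = sets (PiM (insert j0 J) (\<lambda>_. borel::real measure))"
    and ch: "\<And>t. (\<integral>x. iexp (\<Sum>j\<in>insert j0 J. t j * x j) \<partial>\<mu>) = (\<integral>x. iexp (\<Sum>j\<in>insert j0 J. t j * x j) \<partial>\<nu>)"
  note IH = insert.IH
  have j0: "j0 \<notin> J" and fin: "finite J" by fact+
  have [measurable_cong]: "sets \<mu> = sets (PiM (insert j0 J) (\<lambda>_. borel::real measure))" by (rule s1)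
  have [measurable_cong]: "sets \<nu> = sets (PiM (insert j0 J) (\<lambda>_. borel::real measure))" by (rule s2)
  have sumeq: "(\<Sum>j\<in>insert j0 J. (s(j0 := \<tau>)) j * x j) = \<tau> * x j0 + (\<Sum>j\<in>J. s j * x j)"
    for s :: "'i \<Rightarrow> real" and \<tau> x
  proof -
    have "(\<Sum>j\<in>J. (s(j0 := \<tau>)) j * x j) = (\<Sum>j\<in>J. s j * x j)"
      using j0 by (intro sum.cong) auto
    then show ?thesis using j0 fin by simp
  qed
  have Hch: "(\<integral>x. iexp (\<tau> * x j0 + (\<Sum>j\<in>J. s j * x j)) \<partial>\<mu>) = (\<integral>x. iexp (\<tau> * x j0 + (\<Sum>j\<in>J. s j * x j)) \<partial>\<nu>)"
    for \<tau> s
    using ch[of "s(j0 := \<tau>)"] unfolding sumeq .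
  have mj0: "(\<lambda>x. x j0) \<in> borel_measurable \<mu>" "(\<lambda>x. x j0) \<in> borel_measurable \<nu>" by measurable
  have msig: "(\<lambda>x. \<Sum>j\<in>J. s j * x j) \<in> borel_measurable \<mu>" "(\<lambda>x. \<Sum>j\<in>J. s j * x j) \<in> borel_measurable \<nu>"
    for s :: "'i \<Rightarrow> real"
    by (measurable; auto)+
  show "\<mu> = \<nu>"
  proof (rule eq_PiM_helper[OF _ s1 s2 fm])
    show "finite (insert j0 J)" using fin by simp
    fix A :: "'i \<Rightarrow> real set"
    assume A: "\<And>j. j \<in> insert j0 J \<Longrightarrow> A j \<in> sets borel"
    define E where "E = A j0"
    have E: "E \<in> sets borel" using A E_def by simp
    have [measurable]: "E \<in> sets borel" by (rule E)
    define \<mu>' where "\<mu>' = distr (density \<mu> (\<lambda>x. ennreal (indicator (A j0) (x j0))))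
            (PiM J (\<lambda>_. borel::real measure)) (\<lambda>x. restrict x J)"
    define \<nu>' where "\<nu>' = distr (density \<nu> (\<lambda>x. ennreal (indicator (A j0) (x j0))))
            (PiM J (\<lambda>_. borel::real measure)) (\<lambda>x. restrict x J)"
    have mr: "(\<lambda>x. restrict x J) \<in> measurable \<mu> (PiM J (\<lambda>_. borel::real measure))"
      "(\<lambda>x. restrict x J) \<in> measurable \<nu> (PiM J (\<lambda>_. borel::real measure))"
      using measurable_restrict_subset[of J "insert j0 J" "\<lambda>_. borel::real measure"]
        measurable_cong_sets[OF s1 refl] measurable_cong_sets[OF s2 refl] by auto
    have mind: "(\<lambda>x. indicator E (x j0) :: real) \<in> borel_measurable \<mu>"
        "(\<lambda>x. indicator E (x j0) :: real) \<in> borel_measurable \<nu>" by measurable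
    have fm': "finite_measure \<mu>'" unfolding \<mu>'_def
      by (rule finite_measure.finite_measure_distr[OF finite_measure_density_bounded[OF fm, where B=1]])
         (use mind mr in \<open>auto simp: E_def indicator_def\<close>)
    have fn': "finite_measure \<nu>'" unfolding \<nu>'_def
      by (rule finite_measure.finite_measure_distr[OF finite_measure_density_bounded[OF fn, where B=1]])
         (use mind mr in \<open>auto simp: E_def indicator_def\<close>)
    have "\<mu>' = \<nu>'"
    proof (rule IH[OF fm' fn'])
      show "sets \<mu>' = sets (PiM J (\<lambda>_. borel::real measure))" by (simp add: \<mu>'_def)
      show "sets \<nu>' = sets (PiM J (\<lambda>_. borel::real measure))" by (simp add: \<nu>'_def)
      fix s :: "'i \<Rightarrow> real"
      define \<sigma> where "\<sigma> x = (\<Sum>j\<in>J. s j * x j)" for x :: "'i \<Rightarrow> real"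
      have msig': "\<sigma> \<in> borel_measurable \<mu>" "\<sigma> \<in> borel_measurable \<nu>"
        using msig[of s] unfolding \<sigma>_def[abs_def] by auto
      have cmu: "(\<integral>x. iexp (\<Sum>j\<in>J. s j * x j) \<partial>\<mu>') = (\<integral>x. indicator E (x j0) *\<^sub>R iexp (\<sigma> x) \<partial>\<mu>)"
      proof -
        have "(\<integral>x. iexp (\<Sum>j\<in>J. s j * x j) \<partial>\<mu>') = (\<integral>x. iexp (\<Sum>j\<in>J. s j * restrict x J j) \<partial>density \<mu> (\<lambda>x. ennreal (indicator (A j0) (x j0))))"
          unfolding \<mu>'_def by (rule integral_distr) (use mr in measurable)
        also have "\<dots> = (\<integral>x. indicator (A j0) (x j0) *\<^sub>R iexp (\<Sum>j\<in>J. s j * restrict x J j) \<partial>\<mu>)"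
          by (rule integral_density) (use mind mr in \<open>auto simp: E_def\<close>)
        also have "\<dots> = (\<integral>x. indicator E (x j0) *\<^sub>R iexp (\<sigma> x) \<partial>\<mu>)"
          unfolding E_def \<sigma>_def by (intro Bochner_Integration.integral_cong refl arg_cong2[where f=scaleR] arg_cong[where f=iexp] sum.cong) auto
        finally show ?thesis .
      qed
      have cnu: "(\<integral>x. iexp (\<Sum>j\<in>J. s j * x j) \<partial>\<nu>') = (\<integral>x. indicator E (x j0) *\<^sub>R iexp (\<sigma> x) \<partial>\<nu>)"
      proof -
        have "(\<integral>x. iexp (\<Sum>j\<in>J. s j * x j) \<partial>\<nu>') = (\<integral>x. iexp (\<Sum>j\<in>J. s j * restrict x J j) \<partial>density \<nu> (\<lambda>x. ennreal (indicator (A j0) (x j0))))"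
          unfolding \<nu>'_def by (rule integral_distr) (use mr in measurable)
        also have "\<dots> = (\<integral>x. indicator (A j0) (x j0) *\<^sub>R iexp (\<Sum>j\<in>J. s j * restrict x J j) \<partial>\<nu>)"
          by (rule integral_density) (use mind mr in \<open>auto simp: E_def\<close>)
        also have "\<dots> = (\<integral>x. indicator E (x j0) *\<^sub>R iexp (\<sigma> x) \<partial>\<nu>)"
          unfolding E_def \<sigma>_def by (intro Bochner_Integration.integral_cong refl arg_cong2[where f=scaleR] arg_cong[where f=iexp] sum.cong) auto
        finally show ?thesis .
      qed
      have seq: "sets \<mu> = sets \<nu>" using s1 s2 by simp
      have indb: "\<bar>indicator E (x j0) :: real\<bar> \<le> 1" for x by (simp add: indicator_def)
      have R0: "(\<integral>x. 1 * (indicator E (x j0) :: real) \<partial>\<mu>) = (\<integral>x. 1 * (indicator E (x j0) :: real) \<partial>\<nu>)"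
      proof (rule step1d[OF fm fn seq mj0(1)])
        fix \<tau>
        show "(\<integral>x. 1 *\<^sub>R iexp (\<tau> * x j0) \<partial>\<mu>) = (\<integral>x. 1 *\<^sub>R iexp (\<tau> * x j0) \<partial>\<nu>)"
          using Hch[of \<tau> "\<lambda>_. 0"] by simp
      qed (use E in auto)
      have negs: "- \<sigma> x = (\<Sum>j\<in>J. (- s j) * x j)" for x
        unfolding \<sigma>_def by (simp add: sum_negf[symmetric])
      have Hs: "(\<integral>x. iexp (\<tau> * x j0 + \<sigma> x) \<partial>\<mu>) = (\<integral>x. iexp (\<tau> * x j0 + \<sigma> x) \<partial>\<nu>)" for \<tau>
        using Hch[of \<tau> s] unfolding \<sigma>_def .
      have Hn: "(\<integral>x. iexp (\<tau> * x j0 + - \<sigma> x) \<partial>\<mu>) = (\<integral>x. iexp (\<tau> * x j0 + - \<sigma> x) \<partial>\<nu>)" for \<tau>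
        using Hch[of \<tau> "\<lambda>j. - s j"] unfolding negs .
      have H0: "(\<integral>x. iexp (\<tau> * x j0) \<partial>\<mu>) = (\<integral>x. iexp (\<tau> * x j0) \<partial>\<nu>)" for \<tau>
        using Hch[of \<tau> "\<lambda>_. 0"] by simp
      have ma: "(\<lambda>x. \<tau> * x j0) \<in> borel_measurable \<mu>" "(\<lambda>x. \<tau> * x j0) \<in> borel_measurable \<nu>" for \<tau>
        using mj0 by auto
      have cb: "0 \<le> 1 + cos (\<sigma> x)" "1 + cos (\<sigma> x) \<le> 2" "0 \<le> 1 + sin (\<sigma> x)" "1 + sin (\<sigma> x) \<le> 2" for x
        using cos_ge_minus_one[of "\<sigma> x"] cos_le_one[of "\<sigma> x"] sin_ge_minus_one[of "\<sigma> x"] sin_le_one[of "\<sigma> x"]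
        by linarith+
      have Rc: "(\<integral>x. (1 + cos (\<sigma> x)) * indicator E (x j0) \<partial>\<mu>) = (\<integral>x. (1 + cos (\<sigma> x)) * indicator E (x j0) \<partial>\<nu>)"
      proof (rule step1d[OF fm fn seq mj0(1), where w="\<lambda>x. 1 + cos (\<sigma> x)" and B=2])
        fix \<tau>
        show "(\<integral>x. (1 + cos (\<sigma> x)) *\<^sub>R iexp (\<tau> * x j0) \<partial>\<mu>) = (\<integral>x. (1 + cos (\<sigma> x)) *\<^sub>R iexp (\<tau> * x j0) \<partial>\<nu>)"
          unfolding L_cos[OF fm ma(1) msig'(1)] L_cos[OF fn ma(2) msig'(2)] H0 Hs Hn ..
      qed (use E msig' cb in auto)
      have Rs: "(\<integral>x. (1 + sin (\<sigma> x)) * indicator E (x j0) \<partial>\<mu>) = (\<integral>x. (1 + sin (\<sigma> x)) * indicator E (x j0) \<partial>\<nu>)"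
      proof (rule step1d[OF fm fn seq mj0(1), where w="\<lambda>x. 1 + sin (\<sigma> x)" and B=2])
        fix \<tau>
        show "(\<integral>x. (1 + sin (\<sigma> x)) *\<^sub>R iexp (\<tau> * x j0) \<partial>\<mu>) = (\<integral>x. (1 + sin (\<sigma> x)) *\<^sub>R iexp (\<tau> * x j0) \<partial>\<nu>)"
          unfolding L_sin[OF fm ma(1) msig'(1)] L_sin[OF fn ma(2) msig'(2)] H0 Hs Hn ..
      qed (use E msig' cb in auto)
      have [measurable]: "\<sigma> \<in> borel_measurable \<mu>" "\<sigma> \<in> borel_measurable \<nu>" by (fact msig')+
      have mcs: "(\<lambda>x. cos (\<sigma> x)) \<in> borel_measurable \<mu>" "(\<lambda>x. cos (\<sigma> x)) \<in> borel_measurable \<nu>"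
        "(\<lambda>x. sin (\<sigma> x)) \<in> borel_measurable \<mu>" "(\<lambda>x. sin (\<sigma> x)) \<in> borel_measurable \<nu>"
        by measurable
      have csb: "\<bar>cos (\<sigma> x)\<bar> \<le> 1" "\<bar>sin (\<sigma> x)\<bar> \<le> 1" for x by simp_all
      have cos_mu: "(\<integral>x. indicator E (x j0) * cos (\<sigma> x) \<partial>\<mu>) =
          (\<integral>x. (1 + cos (\<sigma> x)) * indicator E (x j0) \<partial>\<mu>) - (\<integral>x. 1 * (indicator E (x j0) :: real) \<partial>\<mu>)"
        by (rule L_sub[OF fm mind(1) mcs(1)]) (auto simp: indicator_def)
      have cos_nu: "(\<integral>x. indicator E (x j0) * cos (\<sigma> x) \<partial>\<nu>) =
          (\<integral>x. (1 + cos (\<sigma> x)) * indicator E (x j0) \<partial>\<nu>) - (\<integral>x. 1 * (indicator E (x j0) :: real) \<partial>\<nu>)"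
        by (rule L_sub[OF fn mind(2) mcs(2)]) (auto simp: indicator_def)
      have sin_mu: "(\<integral>x. indicator E (x j0) * sin (\<sigma> x) \<partial>\<mu>) =
          (\<integral>x. (1 + sin (\<sigma> x)) * indicator E (x j0) \<partial>\<mu>) - (\<integral>x. 1 * (indicator E (x j0) :: real) \<partial>\<mu>)"
        by (rule L_sub[OF fm mind(1) mcs(3)]) (auto simp: indicator_def)
      have sin_nu: "(\<integral>x. indicator E (x j0) * sin (\<sigma> x) \<partial>\<nu>) =
          (\<integral>x. (1 + sin (\<sigma> x)) * indicator E (x j0) \<partial>\<nu>) - (\<integral>x. 1 * (indicator E (x j0) :: real) \<partial>\<nu>)"
        by (rule L_sub[OF fn mind(2) mcs(4)]) (auto simp: indicator_def)
      have C: "(\<integral>x. indicator E (x j0) * cos (\<sigma> x) \<partial>\<mu>) = (\<integral>x. indicator E (x j0) * cos (\<sigma> x) \<partial>\<nu>)"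
        unfolding cos_mu cos_nu R0 Rc ..
      have S: "(\<integral>x. indicator E (x j0) * sin (\<sigma> x) \<partial>\<mu>) = (\<integral>x. indicator E (x j0) * sin (\<sigma> x) \<partial>\<nu>)"
        unfolding sin_mu sin_nu R0 Rs ..
      have "(\<integral>x. indicator E (x j0) *\<^sub>R iexp (\<sigma> x) \<partial>\<mu>) = (\<integral>x. indicator E (x j0) *\<^sub>R iexp (\<sigma> x) \<partial>\<nu>)"
      proof -
        have sp1: "(\<integral>x. indicator E (x j0) *\<^sub>R iexp (\<sigma> x) \<partial>\<mu>) =
          complex_of_real (\<integral>x. indicator E (x j0) * cos (\<sigma> x) \<partial>\<mu>) + \<i> * complex_of_real (\<integral>x. indicator E (x j0) * sin (\<sigma> x) \<partial>\<mu>)"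
          by (rule L_split[where B=1, OF fm mind(1) msig'(1)]) (simp add: indicator_def)
        have sp2: "(\<integral>x. indicator E (x j0) *\<^sub>R iexp (\<sigma> x) \<partial>\<nu>) =
          complex_of_real (\<integral>x. indicator E (x j0) * cos (\<sigma> x) \<partial>\<nu>) + \<i> * complex_of_real (\<integral>x. indicator E (x j0) * sin (\<sigma> x) \<partial>\<nu>)"
          by (rule L_split[where B=1, OF fn mind(2) msig'(2)]) (simp add: indicator_def)
        show ?thesis unfolding sp1 sp2 C S ..
      qed
      then show "(\<integral>x. iexp (\<Sum>j\<in>J. s j * x j) \<partial>\<mu>') = (\<integral>x. iexp (\<Sum>j\<in>J. s j * x j) \<partial>\<nu>')"
        using cmu cnu by simp
    qed
    moreover have e1: "emeasure \<mu>' (PiE J A) = emeasure \<mu> (PiE (insert j0 J) A)"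
      unfolding \<mu>'_def by (rule emb_lemma[OF s1 j0 fin A])
    moreover have e2: "emeasure \<nu>' (PiE J A) = emeasure \<nu> (PiE (insert j0 J) A)"
      unfolding \<nu>'_def by (rule emb_lemma[OF s2 j0 fin A])
    ultimately show "emeasure \<mu> (PiE (insert j0 J) A) = emeasure \<nu> (PiE (insert j0 J) A)"
      by simp
  qed
qed

lemma distr_const_prob:
  assumes "prob_space M" "prob_space N"
  shows "distr M borel (\<lambda>_. 0::real) = distr N borel (\<lambda>_. 0::real)"
proof (rule measure_eqI)
  fix A assume A: "A \<in> sets (distr M borel (\<lambda>_. 0::real))"
  have "emeasure (distr M borel (\<lambda>_. 0::real)) A = (if (0::real) \<in> A then 1 else 0)"
    using A prob_space.emeasure_space_1[OF assms(1)] by (subst emeasure_distr) auto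
  moreover have "emeasure (distr N borel (\<lambda>_. 0::real)) A = (if (0::real) \<in> A then 1 else 0)"
    using A prob_space.emeasure_space_1[OF assms(2)] by (subst emeasure_distr) auto
  ultimately show "emeasure (distr M borel (\<lambda>_. 0::real)) A = emeasure (distr N borel (\<lambda>_. 0::real)) A"
    by simp
qed simp

lemma normal_law_eq:
  assumes pM: "prob_space M" and pN: "prob_space N"
    and Z: "centered_normal_rv M Z v" and Z': "centered_normal_rv N Z' v"
  shows "distr M borel Z = distr N borel Z'"
proof -
  have mZ: "Z \<in> borel_measurable M" and mZ': "Z' \<in> borel_measurable N"
    using Z Z' by (auto simp: centered_normal_rv_def)
  show ?thesis
  proof (cases "v = 0")
    case True
    then have ae: "AE \<omega> in M. Z \<omega> = 0" and ae': "AE \<omega> in N. Z' \<omega> = 0"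
      using Z Z' by (auto simp: centered_normal_rv_def)
    have "distr M borel Z = distr M borel (\<lambda>_. 0::real)"
      by (rule distr_cong_AE) (use ae mZ in auto)
    also have "\<dots> = distr N borel (\<lambda>_. 0::real)" by (rule distr_const_prob[OF pM pN])
    also have "\<dots> = distr N borel Z'"
      by (rule distr_cong_AE) (use ae' mZ' in auto)
    finally show ?thesis .
  next
    case False
    then have d: "distributed M lborel Z (normal_density 0 (sqrt v))"
      and d': "distributed N lborel Z' (normal_density 0 (sqrt v))"
      using Z Z' by (auto simp: centered_normal_rv_def)
    have "distr M borel Z = distr M lborel Z" by (rule distr_cong) auto
    also have "\<dots> = distr N lborel Z'" using d d' by (simp add: distributed_def)
    also have "\<dots> = distr N borel Z'" by (rule distr_cong) auto
    finally show ?thesis .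
  qed
qed

lemma fd_from_cw:
  fixes F :: "'a \<Rightarrow> 'i \<Rightarrow> real" and G :: "'b \<Rightarrow> 'i \<Rightarrow> real"
  assumes pM: "prob_space M" and pN: "prob_space N" and J: "finite J"
    and mF: "\<And>s. s \<in> J \<Longrightarrow> (\<lambda>\<omega>. F \<omega> s) \<in> borel_measurable M"
    and mG: "\<And>s. s \<in> J \<Longrightarrow> (\<lambda>\<omega>. G \<omega> s) \<in> borel_measurable N"
    and lin: "\<And>t. distr M borel (\<lambda>\<omega>. \<Sum>j\<in>J. t j * F \<omega> j) = distr N borel (\<lambda>\<omega>. \<Sum>j\<in>J. t j * G \<omega> j)"
  shows "distr M (PiM J (\<lambda>_. borel)) (\<lambda>\<omega>. \<lambda>s\<in>J. F \<omega> s) = distr N (PiM J (\<lambda>_. borel)) (\<lambda>\<omega>. \<lambda>s\<in>J. G \<omega> s)"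
proof (rule cw_finite[OF J])
  have mF': "(\<lambda>\<omega>. \<lambda>s\<in>J. F \<omega> s) \<in> measurable M (PiM J (\<lambda>_. borel))"
    by (rule measurable_restrict) (rule mF)
  have mG': "(\<lambda>\<omega>. \<lambda>s\<in>J. G \<omega> s) \<in> measurable N (PiM J (\<lambda>_. borel))"
    by (rule measurable_restrict) (rule mG)
  show "finite_measure (distr M (PiM J (\<lambda>_. borel)) (\<lambda>\<omega>. \<lambda>s\<in>J. F \<omega> s))"
    using prob_space.prob_space_distr[OF pM mF'] by (auto simp: prob_space_def)
  show "finite_measure (distr N (PiM J (\<lambda>_. borel)) (\<lambda>\<omega>. \<lambda>s\<in>J. G \<omega> s))"
    using prob_space.prob_space_distr[OF pN mG'] by (auto simp: prob_space_def)
  show "sets (distr M (PiM J (\<lambda>_. borel)) (\<lambda>\<omega>. \<lambda>s\<in>J. F \<omega> s)) = sets (PiM J (\<lambda>_. borel::real measure))" by simp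
  show "sets (distr N (PiM J (\<lambda>_. borel)) (\<lambda>\<omega>. \<lambda>s\<in>J. G \<omega> s)) = sets (PiM J (\<lambda>_. borel::real measure))" by simp
  fix t :: "'i \<Rightarrow> real"
  have mSF: "(\<lambda>\<omega>. \<Sum>j\<in>J. t j * F \<omega> j) \<in> borel_measurable M"
    using mF by (intro borel_measurable_sum borel_measurable_times borel_measurable_const) auto
  have mSG: "(\<lambda>\<omega>. \<Sum>j\<in>J. t j * G \<omega> j) \<in> borel_measurable N"
    using mG by (intro borel_measurable_sum borel_measurable_times borel_measurable_const) auto
  have miexp: "(\<lambda>x. iexp (\<Sum>j\<in>J. t j * x j)) \<in> borel_measurable (PiM J (\<lambda>_. borel::real measure))"
    by measurable
  have "(\<integral>x. iexp (\<Sum>j\<in>J. t j * x j) \<partial>distr M (PiM J (\<lambda>_. borel)) (\<lambda>\<omega>. \<lambda>s\<in>J. F \<omega> s))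
      = (\<integral>\<omega>. iexp (\<Sum>j\<in>J. t j * (\<lambda>s\<in>J. F \<omega> s) j) \<partial>M)"
    by (rule integral_distr[OF mF' miexp])
  also have "\<dots> = (\<integral>\<omega>. iexp (\<Sum>j\<in>J. t j * F \<omega> j) \<partial>M)"
    by (intro Bochner_Integration.integral_cong refl arg_cong[where f=iexp] sum.cong) auto
  also have "\<dots> = (\<integral>y. iexp y \<partial>distr M borel (\<lambda>\<omega>. \<Sum>j\<in>J. t j * F \<omega> j))"
    by (rule integral_distr[symmetric, OF mSF]) measurable
  also have "\<dots> = (\<integral>y. iexp y \<partial>distr N borel (\<lambda>\<omega>. \<Sum>j\<in>J. t j * G \<omega> j))"
    by (simp only: lin)
  also have "\<dots> = (\<integral>\<omega>. iexp (\<Sum>j\<in>J. t j * G \<omega> j) \<partial>N)"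
    by (rule integral_distr[OF mSG]) measurable
  also have "\<dots> = (\<integral>\<omega>. iexp (\<Sum>j\<in>J. t j * (\<lambda>s\<in>J. G \<omega> s) j) \<partial>N)"
    by (intro Bochner_Integration.integral_cong refl arg_cong[where f=iexp] sum.cong) auto
  also have "\<dots> = (\<integral>x. iexp (\<Sum>j\<in>J. t j * x j) \<partial>distr N (PiM J (\<lambda>_. borel)) (\<lambda>\<omega>. \<lambda>s\<in>J. G \<omega> s))"
    by (rule integral_distr[symmetric, OF mG' miexp])
  finally show "(\<integral>x. iexp (\<Sum>j\<in>J. t j * x j) \<partial>distr M (PiM J (\<lambda>_. borel)) (\<lambda>\<omega>. \<lambda>s\<in>J. F \<omega> s))
      = (\<integral>x. iexp (\<Sum>j\<in>J. t j * x j) \<partial>distr N (PiM J (\<lambda>_. borel)) (\<lambda>\<omega>. \<lambda>s\<in>J. G \<omega> s))" .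
qed

lemma fd_to_full:
  fixes F :: "'a \<Rightarrow> 'i \<Rightarrow> real" and G :: "'b \<Rightarrow> 'i \<Rightarrow> real"
  assumes pM: "prob_space M" and pN: "prob_space N"
    and mF: "\<And>s. s \<in> I \<Longrightarrow> (\<lambda>\<omega>. F \<omega> s) \<in> borel_measurable M"
    and mG: "\<And>s. s \<in> I \<Longrightarrow> (\<lambda>\<omega>. G \<omega> s) \<in> borel_measurable N"
    and fd: "\<And>J. finite J \<Longrightarrow> J \<subseteq> I \<Longrightarrow>
      distr M (PiM J (\<lambda>_. borel)) (\<lambda>\<omega>. \<lambda>s\<in>J. F \<omega> s) = distr N (PiM J (\<lambda>_. borel)) (\<lambda>\<omega>. \<lambda>s\<in>J. G \<omega> s)"
  shows "distr M (PiM I (\<lambda>_. borel)) (\<lambda>\<omega>. \<lambda>s\<in>I. F \<omega> s) = distr N (PiM I (\<lambda>_. borel)) (\<lambda>\<omega>. \<lambda>s\<in>I. G \<omega> s)"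
proof -
  have mF': "(\<lambda>\<omega>. \<lambda>s\<in>I. F \<omega> s) \<in> measurable M (PiM I (\<lambda>_. borel::real measure))"
    by (rule measurable_restrict) (rule mF)
  have mG': "(\<lambda>\<omega>. \<lambda>s\<in>I. G \<omega> s) \<in> measurable N (PiM I (\<lambda>_. borel::real measure))"
    by (rule measurable_restrict) (rule mG)
  show ?thesis
  proof (rule measure_eqI_PiM_infinite)
    show "sets (distr M (PiM I (\<lambda>_. borel)) (\<lambda>\<omega>. \<lambda>s\<in>I. F \<omega> s)) = sets (PiM I (\<lambda>_. borel::real measure))" by simp
    show "sets (distr N (PiM I (\<lambda>_. borel)) (\<lambda>\<omega>. \<lambda>s\<in>I. G \<omega> s)) = sets (PiM I (\<lambda>_. borel::real measure))" by simp
    show "finite_measure (distr M (PiM I (\<lambda>_. borel)) (\<lambda>\<omega>. \<lambda>s\<in>I. F \<omega> s))"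
      using prob_space.prob_space_distr[OF pM mF'] by (auto simp: prob_space_def)
    fix A :: "'i \<Rightarrow> real set" and J assume J: "finite J" "J \<subseteq> I" and A: "\<And>i. i \<in> J \<Longrightarrow> A i \<in> sets borel"
    have PE: "prod_emb I (\<lambda>_. borel) J (PiE J A) \<in> sets (PiM I (\<lambda>_. borel::real measure))"
      using sets_PiM_I[of J I A "\<lambda>_. borel"] J A by auto
    have PJ: "PiE J A \<in> sets (PiM J (\<lambda>_. borel::real measure))"
      using A J by (intro sets_PiM_I_finite) auto
    have mFJ: "(\<lambda>\<omega>. \<lambda>s\<in>J. F \<omega> s) \<in> measurable M (PiM J (\<lambda>_. borel::real measure))"
      by (rule measurable_restrict) (use mF J in auto)
    have mGJ: "(\<lambda>\<omega>. \<lambda>s\<in>J. G \<omega> s) \<in> measurable N (PiM J (\<lambda>_. borel::real measure))"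
      by (rule measurable_restrict) (use mG J in auto)
    have pre: "(\<lambda>\<omega>. \<lambda>s\<in>I. H \<omega> s) -` prod_emb I (\<lambda>_. borel) J (PiE J A) = (\<lambda>\<omega>. \<lambda>s\<in>J. H \<omega> s) -` PiE J A"
      for H :: "'c \<Rightarrow> 'i \<Rightarrow> real"
      using J(2) by (auto simp: prod_emb_iff PiE_iff restrict_def extensional_def split: if_splits) blast
    have "emeasure (distr M (PiM I (\<lambda>_. borel)) (\<lambda>\<omega>. \<lambda>s\<in>I. F \<omega> s)) (prod_emb I (\<lambda>_. borel) J (PiE J A))
        = emeasure (distr M (PiM J (\<lambda>_. borel)) (\<lambda>\<omega>. \<lambda>s\<in>J. F \<omega> s)) (PiE J A)"
      using mF' mFJ PE PJ by (simp add: emeasure_distr pre)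
    also have "\<dots> = emeasure (distr N (PiM J (\<lambda>_. borel)) (\<lambda>\<omega>. \<lambda>s\<in>J. G \<omega> s)) (PiE J A)"
      using fd[OF J] by simp
    also have "\<dots> = emeasure (distr N (PiM I (\<lambda>_. borel)) (\<lambda>\<omega>. \<lambda>s\<in>I. G \<omega> s)) (prod_emb I (\<lambda>_. borel) J (PiE J A))"
      using mG' mGJ PE PJ by (simp add: emeasure_distr pre)
    finally show "emeasure (distr M (PiM I (\<lambda>_. borel)) (\<lambda>\<omega>. \<lambda>s\<in>I. F \<omega> s)) (prod_emb I (\<lambda>_. borel) J (PiE J A))
        = emeasure (distr N (PiM I (\<lambda>_. borel)) (\<lambda>\<omega>. \<lambda>s\<in>I. G \<omega> s)) (prod_emb I (\<lambda>_. borel) J (PiE J A))" .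
  qed
qed

lemma f_scale:
  assumes b: "0 < b" and s: "0 \<le> s"
  shows "f_fun \<alpha> c a (b * s) = b * f_fun \<alpha> (c / b powr \<alpha>) a s"
proof (cases "s = 0")
  case True then show ?thesis by (simp add: f_fun_def)
next
  case False
  then have s0: "s > 0" using s by simp
  have int: "(LBINT u:{0<..}. (sin (u / 2))\<^sup>2 / u\<^sup>2 * (1 - exp (- 2 * c * (u / (b * s)) powr \<alpha>))) =
        (LBINT u:{0<..}. (sin (u / 2))\<^sup>2 / u\<^sup>2 * (1 - exp (- 2 * (c / b powr \<alpha>) * (u / s) powr \<alpha>)))"
  proof (rule set_lebesgue_integral_cong)
    show "{0::real<..} \<in> sets lborel" by simp
    show "\<forall>u. u \<in> {0<..} \<longrightarrow> (sin (u / 2))\<^sup>2 / u\<^sup>2 * (1 - exp (- 2 * c * (u / (b * s)) powr \<alpha>)) =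
        (sin (u / 2))\<^sup>2 / u\<^sup>2 * (1 - exp (- 2 * (c / b powr \<alpha>) * (u / s) powr \<alpha>))"
    proof (intro allI impI)
      fix u :: real
      have "(u / (b * s)) powr \<alpha> = (u / s) powr \<alpha> / b powr \<alpha>"
        by (simp add: powr_divide[symmetric] mult.commute)
      then show "(sin (u / 2))\<^sup>2 / u\<^sup>2 * (1 - exp (- 2 * c * (u / (b * s)) powr \<alpha>)) =
        (sin (u / 2))\<^sup>2 / u\<^sup>2 * (1 - exp (- 2 * (c / b powr \<alpha>) * (u / s) powr \<alpha>))"
        by simp
    qed
  qed
  have e1: "f_fun \<alpha> c a (b * s) = 4 * (b * s) / (a * pi) *
      (LBINT u:{0<..}. (sin (u / 2))\<^sup>2 / u\<^sup>2 * (1 - exp (- 2 * c * (u / (b * s)) powr \<alpha>)))"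
    unfolding f_fun_def by (rule if_not_P) (use b s0 in simp)
  have e2: "f_fun \<alpha> (c / b powr \<alpha>) a s = 4 * s / (a * pi) *
      (LBINT u:{0<..}. (sin (u / 2))\<^sup>2 / u\<^sup>2 * (1 - exp (- 2 * (c / b powr \<alpha>) * (u / s) powr \<alpha>)))"
    unfolding f_fun_def by (rule if_not_P) (use s0 in simp)
  show ?thesis unfolding e1 e2 int by simp
qed

lemma G_scale:
  assumes b: "0 < b" and s: "0 \<le> s" and r: "0 \<le> r"
  shows "G_cov \<alpha> c a (b * s) (b * r) = b * G_cov \<alpha> (c / b powr \<alpha>) a s r"
proof -
  have "\<bar>b * s - b * r\<bar> = b * \<bar>s - r\<bar>" using b by (simp add: right_diff_distrib[symmetric] abs_mult)
  then show ?thesis unfolding G_cov_def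
    using f_scale[OF b s] f_scale[OF b r] f_scale[OF b, of "\<bar>s - r\<bar>"]
    by (simp add: field_simps)
qed


theorem proposition3p14:
  fixes \<alpha> c a b :: real
    and M :: "'a measure" and N :: "'b measure"
    and X :: "real \<Rightarrow> 'a \<Rightarrow> real" and Y :: "real \<Rightarrow> 'b \<Rightarrow> real"
  assumes "0 < \<alpha>" "\<alpha> \<le> 2" "0 < c" "0 < a" "0 < b"
    and "centered_gaussian_process M {0..} X (G_cov \<alpha> c a)"
    and "centered_gaussian_process N {0..} Y (G_cov \<alpha> (c / b powr \<alpha>) a)"
  shows "distr M (PiM {0..} (\<lambda>_. borel)) (\<lambda>\<omega>. \<lambda>s\<in>{0..}. X (b * s) \<omega>) =
         distr N (PiM {0..} (\<lambda>_. borel)) (\<lambda>\<omega>. \<lambda>s\<in>{0..}. sqrt b * Y s \<omega>)"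
proof -
  have b: "0 < b" by fact
  have pM: "prob_space M" and mX: "\<And>t. t \<in> {0..} \<Longrightarrow> X t \<in> borel_measurable M"
    and linX: "\<And>S w. finite S \<Longrightarrow> S \<subseteq> {0..} \<Longrightarrow>
        centered_normal_rv M (\<lambda>\<omega>. \<Sum>t\<in>S. w t * X t \<omega>) (\<Sum>s\<in>S. \<Sum>t\<in>S. w s * w t * G_cov \<alpha> c a s t)"
    using assms(6) unfolding centered_gaussian_process_def by auto
  have pN: "prob_space N" and mY: "\<And>t. t \<in> {0..} \<Longrightarrow> Y t \<in> borel_measurable N"
    and linY: "\<And>S w. finite S \<Longrightarrow> S \<subseteq> {0..} \<Longrightarrow>
        centered_normal_rv N (\<lambda>\<omega>. \<Sum>t\<in>S. w t * Y t \<omega>) (\<Sum>s\<in>S. \<Sum>t\<in>S. w s * w t * G_cov \<alpha> (c / b powr \<alpha>) a s t)"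
    using assms(7) unfolding centered_gaussian_process_def by auto
  have mF: "(\<lambda>\<omega>. X (b * s) \<omega>) \<in> borel_measurable M" if "s \<in> {0..}" for s
    using mX[of "b * s"] that b by simp
  have mG: "(\<lambda>\<omega>. sqrt b * Y s \<omega>) \<in> borel_measurable N" if "s \<in> {0..}" for s
    using mY[of s] that by simp
  show ?thesis
  proof (rule fd_to_full[OF pM pN, where F="\<lambda>\<omega> s. X (b * s) \<omega>" and G="\<lambda>\<omega> s. sqrt b * Y s \<omega>"])
    show "\<And>s. s \<in> {0..} \<Longrightarrow> (\<lambda>\<omega>. X (b * s) \<omega>) \<in> borel_measurable M" by (rule mF)
    show "\<And>s. s \<in> {0..} \<Longrightarrow> (\<lambda>\<omega>. sqrt b * Y s \<omega>) \<in> borel_measurable N" by (rule mG)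
    fix J :: "real set" assume J: "finite J" "J \<subseteq> {0..}"
    show "distr M (PiM J (\<lambda>_. borel)) (\<lambda>\<omega>. \<lambda>s\<in>J. X (b * s) \<omega>) =
          distr N (PiM J (\<lambda>_. borel)) (\<lambda>\<omega>. \<lambda>s\<in>J. sqrt b * Y s \<omega>)"
    proof (rule fd_from_cw[OF pM pN J(1), where F="\<lambda>\<omega> s. X (b * s) \<omega>" and G="\<lambda>\<omega> s. sqrt b * Y s \<omega>"])
      show "\<And>s. s \<in> J \<Longrightarrow> (\<lambda>\<omega>. X (b * s) \<omega>) \<in> borel_measurable M" using mF J by auto
      show "\<And>s. s \<in> J \<Longrightarrow> (\<lambda>\<omega>. sqrt b * Y s \<omega>) \<in> borel_measurable N" using mG J by auto
      fix t :: "real \<Rightarrow> real"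
      define v where "v = b * (\<Sum>i\<in>J. \<Sum>j\<in>J. t i * t j * G_cov \<alpha> (c / b powr \<alpha>) a i j)"
      define S where "S = (\<lambda>j. b * j) ` J"
      have inj: "inj_on (\<lambda>j. b * j) J" using b by (auto simp: inj_on_def)
      have S: "finite S" "S \<subseteq> {0..}" using J b unfolding S_def by auto
      have fX: "(\<lambda>\<omega>. \<Sum>u\<in>S. t (u / b) * X u \<omega>) = (\<lambda>\<omega>. \<Sum>j\<in>J. t j * X (b * j) \<omega>)"
        unfolding S_def using b by (simp add: sum.reindex[OF inj])
      have vX: "(\<Sum>u\<in>S. \<Sum>r\<in>S. t (u / b) * t (r / b) * G_cov \<alpha> c a u r) = v"
      proof -
        have "(\<Sum>u\<in>S. \<Sum>r\<in>S. t (u / b) * t (r / b) * G_cov \<alpha> c a u r)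
            = (\<Sum>i\<in>J. \<Sum>j\<in>J. t i * t j * G_cov \<alpha> c a (b * i) (b * j))"
          unfolding S_def using b by (simp add: sum.reindex[OF inj])
        also have "\<dots> = (\<Sum>i\<in>J. \<Sum>j\<in>J. b * (t i * t j * G_cov \<alpha> (c / b powr \<alpha>) a i j))"
        proof (intro sum.cong refl)
          fix i j assume "i \<in> J" "j \<in> J"
          then have "0 \<le> i" "0 \<le> j" using J by auto
          then show "t i * t j * G_cov \<alpha> c a (b * i) (b * j) = b * (t i * t j * G_cov \<alpha> (c / b powr \<alpha>) a i j)"
            using G_scale[OF b, of i j] by simp
        qed
        also have "\<dots> = v" unfolding v_def by (simp add: sum_distrib_left)
        finally show ?thesis .
      qed
      have nX: "centered_normal_rv M (\<lambda>\<omega>. \<Sum>j\<in>J. t j * X (b * j) \<omega>) v"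
        using linX[OF S, of "\<lambda>u. t (u / b)"] unfolding fX vX .
      have fY: "(\<lambda>\<omega>. \<Sum>j\<in>J. (sqrt b * t j) * Y j \<omega>) = (\<lambda>\<omega>. \<Sum>j\<in>J. t j * (sqrt b * Y j \<omega>))"
        by (simp add: algebra_simps)
      have vY: "(\<Sum>i\<in>J. \<Sum>j\<in>J. (sqrt b * t i) * (sqrt b * t j) * G_cov \<alpha> (c / b powr \<alpha>) a i j) = v"
      proof -
        have "(\<Sum>i\<in>J. \<Sum>j\<in>J. (sqrt b * t i) * (sqrt b * t j) * G_cov \<alpha> (c / b powr \<alpha>) a i j)
            = (\<Sum>i\<in>J. \<Sum>j\<in>J. b * (t i * t j * G_cov \<alpha> (c / b powr \<alpha>) a i j))"
        proof (intro sum.cong refl)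
          fix i j
          have "sqrt b * sqrt b = b" using b by simp
          then show "(sqrt b * t i) * (sqrt b * t j) * G_cov \<alpha> (c / b powr \<alpha>) a i j
              = b * (t i * t j * G_cov \<alpha> (c / b powr \<alpha>) a i j)"
            by (metis (no_types, lifting) mult.assoc mult.left_commute)
        qed
        also have "\<dots> = v" unfolding v_def by (simp add: sum_distrib_left)
        finally show ?thesis .
      qed
      have nY: "centered_normal_rv N (\<lambda>\<omega>. \<Sum>j\<in>J. t j * (sqrt b * Y j \<omega>)) v"
        using linY[OF J, of "\<lambda>j. sqrt b * t j"] unfolding fY vY .
      show "distr M borel (\<lambda>\<omega>. \<Sum>j\<in>J. t j * X (b * j) \<omega>) = distr N borel (\<lambda>\<omega>. \<Sum>j\<in>J. t j * (sqrt b * Y j \<omega>))"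
        by (rule normal_law_eq[OF pM pN nX nY])
    qed
  qed
qed

end
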